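(* Let $n\ge 2$, let $P=(P_1,\dots,P_t)$ be a partition of $\{1,\dots,n+1\}$, $n_i=|P_i|$, and ${\cal K}={\cal K}(P)$. Then: (ii) $Cox({\cal K})$ is isomorphic to $\prod_{i=1}^t Sym(1+n_i)$, so its order is $\prod_{i=1}^t (n_i+1)!$; (iii) $Cox({\cal K})=Aut({\cal K})$ if and only if the parts of $P$ have pairwise different sizes; (iv) $Cox({\cal K})$ acts transitively on the $n$-faces of ${\cal K}$.
   Context: For a partition $P=(P_1,\dots,P_t)$ of $\{1,\dots,n+1\}$, ${\cal K}(P)$ is the simplicial complex on the vertex set $\{1,\dots,n+1\}\cup\{p_1,\dots,p_t\}$ ($t$ new vertices) whose $n$-faces are the sets $\{y_1,\dots,y_{n+1}\}$ with, for each $i$, $y_i=i$ or $y_i=p_j$ where $i\in P_j$, subject to the $y_i$ being pairwise distinct; its faces are all nonempty subsets of these. $Aut({\cal K})$ is the group of permutations of the vertices of ${\cal K}$ mapping the set of faces onto itself. For $i\in\{1,\dots,n+1\}$ with $i\in P_j$, let $g_i$ be the permutation of the vertex set of ${\cal K}(P)$ exchanging $i$ and $p_j$ and fixing all other vertices (this is the "reflection" of the facet $\{1,\dots,n+1\}$ across its $(n-1)$-face $\{1,\dots,n+1\}\setminus\{i\}$, and is an automorphism of ${\cal K}(P)$). $Cox({\cal K})$ is the subgroup of $Aut({\cal K})$ generated by $g_1,\dots,g_{n+1}$. *)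

theory Defs
  imports "HOL-Algebra.Sym_Groups" "HOL-Algebra.Product_Groups" "HOL-Algebra.Generated_Groups"
    "HOL-Library.Disjoint_Sets" "HOL-Combinatorics.Transposition"
begin

text \<open>Vertices of K(P): original vertices Inl i (i in {1..n+1}) and one new vertex Inr B
  for each block B of the partition P (B plays the role of p_j).\<close>

definition vertices :: "nat \<Rightarrow> nat set set \<Rightarrow> (nat + nat set) set" where
  "vertices n P = Inl ` {1..n+1} \<union> Inr ` P"

definition blk :: "nat set set \<Rightarrow> nat \<Rightarrow> nat set" where
  "blk P i = (THE B. B \<in> P \<and> i \<in> B)"

definition facets :: "nat \<Rightarrow> nat set set \<Rightarrow> (nat + nat set) set set" where
  "facets n P = {y ` {1..n+1} | y. inj_on y {1..n+1} \<and>
      (\<forall>i\<in>{1..n+1}. y i = Inl i \<or> y i = Inr (blk P i))}"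

definition faces :: "nat \<Rightarrow> nat set set \<Rightarrow> (nat + nat set) set set" where
  "faces n P = {F. F \<noteq> {} \<and> (\<exists>G\<in>facets n P. F \<subseteq> G)}"

definition perm_group :: "'a set \<Rightarrow> ('a \<Rightarrow> 'a) monoid" where
  "perm_group V = \<lparr> carrier = {p. p permutes V}, mult = (\<circ>), one = id \<rparr>"

definition Aut :: "nat \<Rightarrow> nat set set \<Rightarrow> ((nat + nat set) \<Rightarrow> (nat + nat set)) set" where
  "Aut n P = {\<sigma>. \<sigma> permutes vertices n P \<and> (image \<sigma>) ` faces n P = faces n P}"

definition refl_gen :: "nat set set \<Rightarrow> nat \<Rightarrow> (nat + nat set) \<Rightarrow> (nat + nat set)" where
  "refl_gen P i = transpose (Inl i) (Inr (blk P i))"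

definition Cox :: "nat \<Rightarrow> nat set set \<Rightarrow> ((nat + nat set) \<Rightarrow> (nat + nat set)) set" where
  "Cox n P = generate (perm_group (vertices n P)) (refl_gen P ` {1..n+1})"

definition Cox_group :: "nat \<Rightarrow> nat set set \<Rightarrow> ((nat + nat set) \<Rightarrow> (nat + nat set)) monoid" where
  "Cox_group n P = (perm_group (vertices n P)) \<lparr> carrier := Cox n P \<rparr>"

end

theory Submission
  imports Defs
begin

definition SB :: "nat set \<Rightarrow> (nat + nat set) set" where
  "SB B = insert (Inr B) (Inl ` B)"

definition bo :: "nat set set \<Rightarrow> nat + nat set \<Rightarrow> nat set" where
  "bo P x = (case x of Inl i \<Rightarrow> blk P i | Inr B \<Rightarrow> B)"

definition Hs :: "nat \<Rightarrow> nat set set \<Rightarrow> ((nat + nat set) \<Rightarrow> (nat + nat set)) set" where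
  "Hs n P = {\<sigma>. \<sigma> permutes vertices n P \<and> (\<forall>B\<in>P. \<sigma> ` SB B = SB B)}"

lemma perm_group_is_group: "group (perm_group V)"
  using permutes_inv permutes_inv_o(2)
  by (auto intro!: groupI
         simp add: perm_group_def permutes_compose
                   permutes_id comp_assoc, blast)

locale kp =
  fixes n :: nat and P :: "nat set set"
  assumes part: "partition_on {1..n+1} P"
begin

abbreviation "V \<equiv> vertices n P"

lemma disj: "B \<in> P \<Longrightarrow> C \<in> P \<Longrightarrow> B \<noteq> C \<Longrightarrow> B \<inter> C = {}"
  using partition_onD2[OF part] unfolding disjoint_def by blast

lemma blk_eq: "B \<in> P \<Longrightarrow> i \<in> B \<Longrightarrow> blk P i = B"
  unfolding blk_def using disj by (intro the_equality) auto

lemma blk_in: "i \<in> {1..n+1} \<Longrightarrow> blk P i \<in> P \<and> i \<in> blk P i"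
proof -
  assume "i \<in> {1..n+1}"
  then obtain B where "B \<in> P" "i \<in> B" using partition_onD1[OF part] by blast
  thus ?thesis using blk_eq by simp
qed

lemma sub: "B \<in> P \<Longrightarrow> B \<subseteq> {1..n+1}"
  using partition_onD1[OF part] by blast

lemma finB: "B \<in> P \<Longrightarrow> finite B"
  using sub finite_subset by blast

lemma finP: "finite P"
  using partition_onD1[OF part] finite_UnionD by (metis finite_atLeastAtMost)

lemma neB: "B \<in> P \<Longrightarrow> B \<noteq> {}"
  using partition_onD3[OF part] by blast

lemma finSB: "B \<in> P \<Longrightarrow> finite (SB B)"
  using finB by (simp add: SB_def)

lemma cardSB: "B \<in> P \<Longrightarrow> card (SB B) = 1 + card B"
  using finB by (simp add: SB_def card_image image_iff)

lemma SB_disj: "B \<in> P \<Longrightarrow> C \<in> P \<Longrightarrow> B \<noteq> C \<Longrightarrow> SB B \<inter> SB C = {}"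
  using disj by (auto simp: SB_def)

lemma V_eq: "V = (\<Union>B\<in>P. SB B)"
  using partition_onD1[OF part] by (auto simp: vertices_def SB_def)

lemma SB_V: "B \<in> P \<Longrightarrow> SB B \<subseteq> V"
  using V_eq by blast

lemma finV: "finite V"
  by (simp add: vertices_def finP)

lemma bo_in: "x \<in> V \<Longrightarrow> bo P x \<in> P \<and> x \<in> SB (bo P x)"
  using blk_in by (auto simp: vertices_def bo_def SB_def)

lemma bo_eq: "B \<in> P \<Longrightarrow> x \<in> SB B \<Longrightarrow> bo P x = B"
  using blk_eq by (auto simp: bo_def SB_def)

lemma SB_uniq: "B \<in> P \<Longrightarrow> C \<in> P \<Longrightarrow> x \<in> SB B \<Longrightarrow> x \<in> SB C \<Longrightarrow> B = C"
  using SB_disj by blast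

lemma pg_mult[simp]: "mult (perm_group X) = (\<circ>)" and pg_one[simp]: "one (perm_group X) = id"
  and pg_carrier[simp]: "carrier (perm_group X) = {p. p permutes X}"
  by (simp_all add: perm_group_def)

lemma Cox_comp: "a \<in> Cox n P \<Longrightarrow> b \<in> Cox n P \<Longrightarrow> a \<circ> b \<in> Cox n P"
  unfolding Cox_def by (metis generate.eng pg_mult)

lemma Cox_id: "id \<in> Cox n P"
  unfolding Cox_def by (metis generate.one pg_one)

lemma gen_in: "i \<in> {1..n+1} \<Longrightarrow> refl_gen P i \<in> Cox n P"
  unfolding Cox_def by (rule generate.incl) auto

lemma transp_Hs: "B \<in> P \<Longrightarrow> a \<in> SB B \<Longrightarrow> b \<in> SB B \<Longrightarrow> transpose a b \<in> Hs n P"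
proof -
  assume B: "B \<in> P" and a: "a \<in> SB B" and b: "b \<in> SB B"
  have "transpose a b permutes V" using SB_V[OF B] a b by (intro permutes_swap_id) auto
  moreover have "transpose a b ` SB C = SB C" if "C \<in> P" for C
  proof (rule transpose_image_eq)
    show "a \<in> SB C \<longleftrightarrow> b \<in> SB C" using SB_uniq[OF B that] a b by blast
  qed
  ultimately show ?thesis by (simp add: Hs_def)
qed

lemma Hs_comp: "a \<in> Hs n P \<Longrightarrow> b \<in> Hs n P \<Longrightarrow> a \<circ> b \<in> Hs n P"
proof -
  assume a: "a \<in> Hs n P" and b: "b \<in> Hs n P"
  have "a \<circ> b permutes V" using a b permutes_compose by (auto simp: Hs_def)
  moreover have "(a \<circ> b) ` SB B = SB B" if "B \<in> P" for B
  proof -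
    have "(a \<circ> b) ` SB B = a ` (b ` SB B)" by (rule image_comp[symmetric])
    also have "\<dots> = SB B" using a b that by (simp add: Hs_def)
    finally show ?thesis .
  qed
  ultimately show ?thesis by (simp add: Hs_def)
qed

lemma Cox_sub_Hs: "Cox n P \<subseteq> Hs n P"
proof
  fix x assume "x \<in> Cox n P"
  then show "x \<in> Hs n P" unfolding Cox_def
  proof (induction rule: generate.induct)
    case one
    then show ?case using permutes_id[of V] by (simp add: Hs_def id_def)
  next
    case (incl h)
    then obtain i where i: "i \<in> {1..n+1}" and h: "h = refl_gen P i" by auto
    show ?case unfolding h refl_gen_def using blk_in[OF i]
      by (intro transp_Hs[of "blk P i"]) (auto simp: SB_def)
  next
    case (inv h)
    then obtain i where i: "i \<in> {1..n+1}" and h: "h = refl_gen P i" by auto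
    have hV: "h \<in> carrier (perm_group V)" unfolding h refl_gen_def using blk_in[OF i] i
      by (auto intro!: permutes_swap_id simp: vertices_def)
    have "inv\<^bsub>perm_group V\<^esub> h = h"
      by (rule group.inv_equality[OF perm_group_is_group]) (use hV in \<open>auto simp: h refl_gen_def\<close>)
    moreover have "h \<in> Hs n P" unfolding h refl_gen_def using blk_in[OF i]
      by (intro transp_Hs[of "blk P i"]) (auto simp: SB_def)
    ultimately show ?case by simp
  next
    case (eng h1 h2)
    have "h1 \<circ> h2 \<in> Hs n P" using Hs_comp eng.IH by blast
    then show ?case by (simp add: comp_def)
  qed
qed

lemma transp_Cox: "B \<in> P \<Longrightarrow> a \<in> SB B \<Longrightarrow> b \<in> SB B \<Longrightarrow> transpose a b \<in> Cox n P"
proof -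
  assume B: "B \<in> P" and a: "a \<in> SB B" and b: "b \<in> SB B"
  have g: "transpose (Inl i) (Inr B) \<in> Cox n P" if "i \<in> B" for i
  proof -
    have "i \<in> {1..n+1}" using sub[OF B] that by blast
    from gen_in[OF this] show ?thesis using blk_eq[OF B that] by (simp add: refl_gen_def)
  qed
  show ?thesis
  proof (cases "a = b")
    case True then show ?thesis using Cox_id by simp
  next
    case False
    show ?thesis
    proof (cases a)
      case (Inl i)
      then have i: "i \<in> B" using a by (auto simp: SB_def)
      show ?thesis
      proof (cases b)
        case (Inl j)
        then have j: "j \<in> B" using b by (auto simp: SB_def)
        have "transpose (Inl i) (Inr B) \<circ> transpose (Inr B) (Inl j) \<circ> transpose (Inl i) (Inr B)
           = transpose (Inl i) (Inl j)"
          using False Inl \<open>a = Inl i\<close> by (intro transpose_comp_triple) auto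
        moreover have "transpose (Inr B) (Inl j) = transpose (Inl j) (Inr B)"
          by (simp add: transpose_commute)
        ultimately show ?thesis using Cox_comp g[OF i] g[OF j] Inl \<open>a = Inl i\<close> by metis
      next
        case (Inr C)
        then have "C = B" using b by (auto simp: SB_def)
        then show ?thesis using g[OF i] Inr \<open>a = Inl i\<close> by simp
      qed
    next
      case (Inr C)
      then have C: "C = B" using a by (auto simp: SB_def)
      then obtain j where "b = Inl j" "j \<in> B" using b False Inr by (auto simp: SB_def)
      then show ?thesis using g Inr C by (simp add: transpose_commute)
    qed
  qed
qed

lemma Hs_sub_Cox: "\<sigma> \<in> Hs n P \<Longrightarrow> \<sigma> \<in> Cox n P"
proof (induction "card {x. \<sigma> x \<noteq> x}" arbitrary: \<sigma> rule: less_induct)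
  case less
  show ?case
  proof (cases "\<sigma> = id")
    case True then show ?thesis using Cox_id by simp
  next
    case False
    then obtain x where x: "\<sigma> x \<noteq> x" by (auto simp: fun_eq_iff)
    have sV: "\<sigma> permutes V" using less.prems by (simp add: Hs_def)
    have xV: "x \<in> V" using permutes_not_in[OF sV] x by blast
    define B where "B = bo P x"
    have B: "B \<in> P" "x \<in> SB B" using bo_in[OF xV] B_def by auto
    have sx: "\<sigma> x \<in> SB B" using less.prems B by (auto simp: Hs_def)
    define \<tau> where "\<tau> = transpose x (\<sigma> x)"
    have tC: "\<tau> \<in> Cox n P" unfolding \<tau>_def using transp_Cox B sx by blast
    have tH: "\<tau> \<in> Hs n P" unfolding \<tau>_def using transp_Hs B sx by blast
    define \<sigma>' where "\<sigma>' = \<tau> \<circ> \<sigma>"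
    have s'H: "\<sigma>' \<in> Hs n P" unfolding \<sigma>'_def using Hs_comp tH less.prems by blast
    have fin: "finite {x. \<sigma> x \<noteq> x}"
      using permutes_not_in[OF sV] finV by (metis (mono_tags, lifting) finite_subset mem_Collect_eq subsetI)
    have inj: "inj \<sigma>" using sV permutes_inj by blast
    have "{y. \<sigma>' y \<noteq> y} \<subseteq> {y. \<sigma> y \<noteq> y} - {x}"
    proof
      fix y assume "y \<in> {y. \<sigma>' y \<noteq> y}"
      then have ne: "\<sigma>' y \<noteq> y" by simp
      have "\<sigma>' x = x" unfolding \<sigma>'_def \<tau>_def by simp
      moreover have "\<sigma> y \<noteq> y"
      proof
        assume e: "\<sigma> y = y"
        then have "y \<noteq> x" using x by auto
        moreover have "y \<noteq> \<sigma> x" using inj e \<open>y \<noteq> x\<close> by (metis injD)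
        ultimately show False using ne e unfolding \<sigma>'_def \<tau>_def by (simp add: transpose_def)
      qed
      ultimately show "y \<in> {y. \<sigma> y \<noteq> y} - {x}" using ne by auto
    qed
    then have "{y. \<sigma>' y \<noteq> y} \<subset> {x. \<sigma> x \<noteq> x}" using x by blast
    then have "card {y. \<sigma>' y \<noteq> y} < card {x. \<sigma> x \<noteq> x}"
      using psubset_card_mono[OF fin] by blast
    then have "\<sigma>' \<in> Cox n P" using less.hyps s'H by blast
    moreover have "\<sigma> = \<tau> \<circ> \<sigma>'" unfolding \<sigma>'_def \<tau>_def by (simp add: comp_assoc[symmetric])
    ultimately show ?thesis using Cox_comp tC by simp
  qed
qed

lemma Cox_eq: "Cox n P = Hs n P"
  using Cox_sub_Hs Hs_sub_Cox by blast


definition glue :: "(nat set \<Rightarrow> (nat + nat set) \<Rightarrow> (nat + nat set)) \<Rightarrow> (nat + nat set) \<Rightarrow> (nat + nat set)" where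
  "glue \<rho> x = (if x \<in> V then \<rho> (bo P x) x else x)"

lemma glue_on: "B \<in> P \<Longrightarrow> x \<in> SB B \<Longrightarrow> glue \<rho> x = \<rho> B x"
  using SB_V bo_eq unfolding glue_def by auto

lemma glue_Hs:
  assumes rho: "\<And>B. B \<in> P \<Longrightarrow> \<rho> B permutes SB B"
  shows "glue \<rho> \<in> Hs n P"
proof -
  have img: "glue \<rho> ` SB B = SB B" if B: "B \<in> P" for B
  proof -
    have "glue \<rho> ` SB B = \<rho> B ` SB B" using glue_on[OF B] by (simp cong: image_cong)
    also have "\<dots> = SB B" using rho[OF B] by (rule permutes_image)
    finally show ?thesis .
  qed
  have "inj_on (glue \<rho>) V"
  proof (rule inj_onI)
    fix x y assume x: "x \<in> V" and y: "y \<in> V" and e: "glue \<rho> x = glue \<rho> y"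
    obtain B where B: "B \<in> P" "x \<in> SB B" using bo_in[OF x] by blast
    obtain C where C: "C \<in> P" "y \<in> SB C" using bo_in[OF y] by blast
    have "glue \<rho> x \<in> SB B" using img[OF B(1)] B(2) by blast
    moreover have "glue \<rho> y \<in> SB C" using img[OF C(1)] C(2) by blast
    ultimately have "B = C" using SB_uniq B C e by metis
    then have "\<rho> B x = \<rho> B y" using e glue_on B C by metis
    then show "x = y" using permutes_inj[OF rho[OF B(1)]] by (simp add: inj_eq)
  qed
  moreover have "glue \<rho> ` V = V" using img V_eq by (simp add: image_UN)
  ultimately have "bij_betw (glue \<rho>) V V" by (simp add: bij_betw_def)
  then have "glue \<rho> permutes V" by (rule bij_imp_permutes) (simp add: glue_def)
  then show ?thesis unfolding Hs_def using img by blast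
qed

abbreviation I :: "nat set \<Rightarrow> nat set" where "I B \<equiv> {1..1 + card B}"

definition e :: "nat set \<Rightarrow> nat \<Rightarrow> (nat + nat set)" where
  "e B = (SOME h. bij_betw h (I B) (SB B))"

lemma e_bij: "B \<in> P \<Longrightarrow> bij_betw (e B) (I B) (SB B)"
proof -
  assume B: "B \<in> P"
  obtain h where "bij_betw h {1..card (SB B)} (SB B)" using ex_bij_betw_nat_finite_1[OF finSB[OF B]] by blast
  then have "\<exists>h. bij_betw h (I B) (SB B)" using cardSB[OF B] by auto
  then show ?thesis unfolding e_def by (rule someI_ex)
qed

definition ei :: "nat set \<Rightarrow> (nat + nat set) \<Rightarrow> nat" where
  "ei B = inv_into (I B) (e B)"

lemma ei_bij: "B \<in> P \<Longrightarrow> bij_betw (ei B) (SB B) (I B)"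
  unfolding ei_def by (rule bij_betw_inv_into[OF e_bij])

lemma e_ei: "B \<in> P \<Longrightarrow> y \<in> SB B \<Longrightarrow> e B (ei B y) = y"
  unfolding ei_def using e_bij by (metis bij_betw_inv_into_right)

lemma ei_e: "B \<in> P \<Longrightarrow> k \<in> I B \<Longrightarrow> ei B (e B k) = k"
  unfolding ei_def using e_bij by (metis bij_betw_inv_into_left)

lemma e_in: "B \<in> P \<Longrightarrow> k \<in> I B \<Longrightarrow> e B k \<in> SB B"
  using e_bij bij_betwE by blast

lemma ei_in: "B \<in> P \<Longrightarrow> y \<in> SB B \<Longrightarrow> ei B y \<in> I B"
  using ei_bij bij_betwE by blast

definition loc :: "((nat + nat set) \<Rightarrow> (nat + nat set)) \<Rightarrow> nat set \<Rightarrow> nat \<Rightarrow> nat" where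
  "loc \<sigma> B k = (if k \<in> I B then ei B (\<sigma> (e B k)) else k)"

definition phi :: "((nat + nat set) \<Rightarrow> (nat + nat set)) \<Rightarrow> nat set \<Rightarrow> nat \<Rightarrow> nat" where
  "phi \<sigma> = (\<lambda>B\<in>P. loc \<sigma> B)"

lemma Hs_in: "\<sigma> \<in> Hs n P \<Longrightarrow> B \<in> P \<Longrightarrow> x \<in> SB B \<Longrightarrow> \<sigma> x \<in> SB B"
  unfolding Hs_def by blast

lemma loc_perm: "\<sigma> \<in> Hs n P \<Longrightarrow> B \<in> P \<Longrightarrow> loc \<sigma> B permutes I B"
proof -
  assume s: "\<sigma> \<in> Hs n P" and B: "B \<in> P"
  have sb: "bij_betw \<sigma> (SB B) (SB B)"
    using s B permutes_inj unfolding Hs_def bij_betw_def by (metis (mono_tags, lifting) inj_on_subset mem_Collect_eq top_greatest)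
  have "bij_betw (ei B \<circ> (\<sigma> \<circ> e B)) (I B) (I B)"
    by (rule bij_betw_trans[OF bij_betw_trans[OF e_bij[OF B] sb] ei_bij[OF B]])
  moreover have "bij_betw (loc \<sigma> B) (I B) (I B) = bij_betw (ei B \<circ> (\<sigma> \<circ> e B)) (I B) (I B)"
    by (rule bij_betw_cong) (simp add: loc_def)
  ultimately have "bij_betw (loc \<sigma> B) (I B) (I B)" by simp
  then show ?thesis by (rule bij_imp_permutes) (auto simp: loc_def)
qed

lemma loc_comp: "\<sigma> \<in> Hs n P \<Longrightarrow> \<tau> \<in> Hs n P \<Longrightarrow> B \<in> P \<Longrightarrow> loc (\<sigma> \<circ> \<tau>) B = loc \<sigma> B \<circ> loc \<tau> B"
proof (rule ext)
  fix k assume s: "\<sigma> \<in> Hs n P" and t: "\<tau> \<in> Hs n P" and B: "B \<in> P"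
  show "loc (\<sigma> \<circ> \<tau>) B k = (loc \<sigma> B \<circ> loc \<tau> B) k"
  proof (cases "k \<in> I B")
    case True
    have "\<tau> (e B k) \<in> SB B" using Hs_in[OF t B e_in[OF B True]] .
    then have "ei B (\<tau> (e B k)) \<in> I B" "e B (ei B (\<tau> (e B k))) = \<tau> (e B k)"
      using ei_in[OF B] e_ei[OF B] by auto
    then show ?thesis using True by (simp add: loc_def)
  next
    case False then show ?thesis by (auto simp: loc_def)
  qed
qed

lemma sg_carrier: "carrier (sym_group m) = {p. p permutes {1..m}}"
  by (simp add: sym_group_def)

lemma CG_carrier[simp]: "carrier (Cox_group n P) = Cox n P"
  and CG_mult[simp]: "mult (Cox_group n P) = (\<circ>)"
  by (simp_all add: Cox_group_def perm_group_def)

lemma phi_iso: "phi \<in> iso (Cox_group n P) (product_group P (\<lambda>B. sym_group (1 + card B)))"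
proof -
  let ?T = "product_group P (\<lambda>B. sym_group (1 + card B))"
  have into: "phi \<sigma> \<in> carrier ?T" if "\<sigma> \<in> Hs n P" for \<sigma>
    using loc_perm[OF that] by (simp add: phi_def sg_carrier)
  have mul: "phi (\<sigma> \<circ> \<tau>) = phi \<sigma> \<otimes>\<^bsub>?T\<^esub> phi \<tau>" if "\<sigma> \<in> Hs n P" "\<tau> \<in> Hs n P" for \<sigma> \<tau>
    unfolding product_group_def sym_group_mult phi_def
    apply simp
    apply (rule restrict_ext)
    using loc_comp[OF that] by simp
  have hom: "phi \<in> hom (Cox_group n P) ?T"
    unfolding hom_def using into mul by (simp add: Cox_eq)
  have inj: "inj_on phi (Hs n P)"
  proof (rule inj_onI)
    fix \<sigma> \<tau> assume s: "\<sigma> \<in> Hs n P" and t: "\<tau> \<in> Hs n P" and eq: "phi \<sigma> = phi \<tau>"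
    show "\<sigma> = \<tau>"
    proof (rule ext)
      fix x
      show "\<sigma> x = \<tau> x"
      proof (cases "x \<in> V")
        case False
        then show ?thesis using s t permutes_not_in unfolding Hs_def by (metis (no_types, lifting) mem_Collect_eq)
      next
        case True
        then obtain B where B: "B \<in> P" "x \<in> SB B" using bo_in by blast
        define k where "k = ei B x"
        have k: "k \<in> I B" "e B k = x" using ei_in[OF B] e_ei[OF B] k_def by auto
        have "loc \<sigma> B k = loc \<tau> B k" using eq B(1) unfolding phi_def by (metis restrict_apply')
        then have "ei B (\<sigma> x) = ei B (\<tau> x)" using k by (simp add: loc_def)
        then show ?thesis using e_ei[OF B(1)] Hs_in[OF s B] Hs_in[OF t B] by metis
      qed
    qed
  qed
  have surj: "carrier ?T \<subseteq> phi ` Hs n P"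
  proof
    fix \<pi> assume "\<pi> \<in> carrier ?T"
    then have pi: "\<pi> \<in> (\<Pi>\<^sub>E B\<in>P. {p. p permutes I B})" by (simp add: sg_carrier)
    define \<rho> where "\<rho> B x = (if x \<in> SB B then e B (\<pi> B (ei B x)) else x)" for B x
    have rho: "\<rho> B permutes SB B" if B: "B \<in> P" for B
    proof -
      have pB: "\<pi> B permutes I B" using pi B by auto
      have pb: "bij_betw (\<pi> B) (I B) (I B)" using permutes_imp_bij[OF pB] .
      have "bij_betw (e B \<circ> (\<pi> B \<circ> ei B)) (SB B) (SB B)"
        by (rule bij_betw_trans[OF bij_betw_trans[OF ei_bij[OF B] pb] e_bij[OF B]])
      moreover have "bij_betw (\<rho> B) (SB B) (SB B) = bij_betw (e B \<circ> (\<pi> B \<circ> ei B)) (SB B) (SB B)"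
        by (rule bij_betw_cong) (simp add: \<rho>_def)
      ultimately have "bij_betw (\<rho> B) (SB B) (SB B)" by simp
      then show ?thesis by (rule bij_imp_permutes) (simp add: \<rho>_def)
    qed
    have gH: "glue \<rho> \<in> Hs n P" by (rule glue_Hs[OF rho])
    have "phi (glue \<rho>) = \<pi>"
    proof (rule ext)
      fix B show "phi (glue \<rho>) B = \<pi> B"
      proof (cases "B \<in> P")
        case False then show ?thesis using PiE_arb[OF pi False] by (simp add: phi_def)
      next
        case B: True
        have "\<pi> B \<in> {p. p permutes I B}" by (rule PiE_mem[OF pi B])
        then have pB: "\<pi> B permutes I B" by simp
        show ?thesis
        proof (rule ext)
          fix k show "phi (glue \<rho>) B k = \<pi> B k"
          proof (cases "k \<in> I B")
            case True
            have pk: "\<pi> B k \<in> I B" using permutes_in_image[OF pB, of k] True by simp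
            have ek: "e B k \<in> SB B" using e_in[OF B True] .
            have "phi (glue \<rho>) B k = ei B (glue \<rho> (e B k))" using B True by (simp add: phi_def loc_def)
            also have "\<dots> = ei B (\<rho> B (e B k))" using glue_on[OF B ek] by simp
            also have "\<dots> = ei B (e B (\<pi> B (ei B (e B k))))" using ek by (simp add: \<rho>_def)
            also have "\<dots> = ei B (e B (\<pi> B k))" using ei_e[OF B True] by simp
            also have "\<dots> = \<pi> B k" using ei_e[OF B pk] .
            finally show ?thesis .
          next
            case False
            then have "phi (glue \<rho>) B k = k" using B by (auto simp: phi_def loc_def)
            then show ?thesis using permutes_not_in[OF pB False] by simp
          qed
        qed
      qed
    qed
    then have "\<pi> = phi (glue \<rho>)" by simp
    then show "\<pi> \<in> phi ` Hs n P" using gH by (rule image_eqI)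
  qed
  have "bij_betw phi (Hs n P) (carrier ?T)"
    using inj surj into unfolding bij_betw_def by blast
  then show ?thesis using hom by (simp add: iso_def Cox_eq)
qed

lemma order_Cox: "order (Cox_group n P) = (\<Prod>B\<in>P. fact (card B + 1))"
proof -
  have "order (Cox_group n P) = card (carrier (product_group P (\<lambda>B. sym_group (1 + card B))))"
    unfolding order_def using iso_same_card is_isoI[OF phi_iso] by blast
  also have "\<dots> = (\<Prod>B\<in>P. card {p. p permutes I B})"
    by (simp add: card_PiE finP sg_carrier)
  also have "\<dots> = (\<Prod>B\<in>P. fact (card B + 1))"
    by (intro prod.cong refl card_permutations) auto
  finally show ?thesis .
qed


lemma y_in: "i \<in> {1..n+1} \<Longrightarrow> y i = Inl i \<or> y i = Inr (blk P i) \<Longrightarrow> y i \<in> SB (blk P i)"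
  using blk_in by (auto simp: SB_def)

lemma facet_props:
  assumes F: "F \<in> facets n P"
  shows "F \<subseteq> V" "\<And>B. B \<in> P \<Longrightarrow> card (F \<inter> SB B) = card B"
proof -
  obtain y where Fy: "F = y ` {1..n+1}" and inj: "inj_on y {1..n+1}"
    and ch: "\<forall>i\<in>{1..n+1}. y i = Inl i \<or> y i = Inr (blk P i)"
    using F unfolding facets_def by blast
  have yS: "y i \<in> SB (blk P i)" if "i \<in> {1..n+1}" for i using y_in[OF that] ch that by blast
  show "F \<subseteq> V"
  proof
    fix z assume "z \<in> F"
    then obtain i where i: "i \<in> {1..n+1}" "z = y i" using Fy by blast
    then show "z \<in> V" using yS[OF i(1)] SB_V[OF blk_in[OF i(1), THEN conjunct1]] by blast
  qed
  fix B assume B: "B \<in> P"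
  have "F \<inter> SB B = y ` B"
  proof
    show "F \<inter> SB B \<subseteq> y ` B"
    proof
      fix z assume z: "z \<in> F \<inter> SB B"
      then obtain i where i: "i \<in> {1..n+1}" "z = y i" using Fy by blast
      have "blk P i = B" using SB_uniq[OF blk_in[OF i(1), THEN conjunct1] B yS[OF i(1)]] z i(2) by blast
      then show "z \<in> y ` B" using blk_in[OF i(1)] i by auto
    qed
    show "y ` B \<subseteq> F \<inter> SB B"
    proof
      fix z assume "z \<in> y ` B"
      then obtain i where i: "i \<in> B" "z = y i" by blast
      have i1: "i \<in> {1..n+1}" using sub[OF B] i(1) by blast
      have "z \<in> F" using Fy i i1 by blast
      moreover have "z \<in> SB B" using yS[OF i1] blk_eq[OF B i(1)] i(2) by simp
      ultimately show "z \<in> F \<inter> SB B" by blast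
    qed
  qed
  moreover have "inj_on y B" using inj sub[OF B] inj_on_subset by blast
  ultimately show "card (F \<inter> SB B) = card B" by (simp add: card_image)
qed

lemma faces_char: "T \<in> faces n P \<longleftrightarrow> T \<noteq> {} \<and> T \<subseteq> V \<and> (\<forall>B\<in>P. \<not> SB B \<subseteq> T)"
proof
  assume "T \<in> faces n P"
  then obtain F where T: "T \<noteq> {}" "T \<subseteq> F" and F: "F \<in> facets n P" unfolding faces_def by blast
  have "\<not> SB B \<subseteq> T" if B: "B \<in> P" for B
  proof
    assume "SB B \<subseteq> T"
    then have "SB B \<subseteq> F \<inter> SB B" using T by blast
    then have "card (SB B) \<le> card (F \<inter> SB B)" using finSB[OF B] by (simp add: card_mono)
    then show False using facet_props(2)[OF F B] cardSB[OF B] by simp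
  qed
  then show "T \<noteq> {} \<and> T \<subseteq> V \<and> (\<forall>B\<in>P. \<not> SB B \<subseteq> T)" using T facet_props(1)[OF F] by blast
next
  assume A: "T \<noteq> {} \<and> T \<subseteq> V \<and> (\<forall>B\<in>P. \<not> SB B \<subseteq> T)"
  define c where "c B = (SOME x. x \<in> SB B \<and> x \<notin> T)" for B
  have c: "c B \<in> SB B \<and> c B \<notin> T" if "B \<in> P" for B
  proof -
    have "\<exists>x. x \<in> SB B \<and> x \<notin> T" using A that by blast
    then show ?thesis unfolding c_def by (rule someI_ex)
  qed
  define y where "y i = (if c (blk P i) = Inl i then Inr (blk P i) else Inl i)" for i
  have inj: "inj_on y {1..n+1}"
  proof (rule inj_onI)
    fix i j assume i: "i \<in> {1..n+1}" and j: "j \<in> {1..n+1}" and e: "y i = y j"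
    show "i = j"
    proof (cases "c (blk P i) = Inl i")
      case True
      then have "y j = Inr (blk P i)" using e by (simp add: y_def)
      then have "c (blk P j) = Inl j" "blk P j = blk P i" by (auto simp: y_def split: if_splits)
      then show ?thesis using True by simp
    next
      case False
      then have "y j = Inl i" using e by (simp add: y_def)
      then show ?thesis by (auto simp: y_def split: if_splits)
    qed
  qed
  have ch: "\<forall>i\<in>{1..n+1}. y i = Inl i \<or> y i = Inr (blk P i)" by (simp add: y_def)
  have "y ` {1..n+1} \<in> facets n P" unfolding facets_def using inj ch by blast
  moreover have "T \<subseteq> y ` {1..n+1}"
  proof
    fix t assume t: "t \<in> T"
    then have tV: "t \<in> V" using A by blast
    show "t \<in> y ` {1..n+1}"
    proof (cases t)
      case (Inl i)
      then have i: "i \<in> {1..n+1}" using tV by (auto simp: vertices_def)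
      have "c (blk P i) \<noteq> Inl i" using c[OF blk_in[OF i, THEN conjunct1]] t Inl by auto
      then have "y i = t" using Inl by (simp add: y_def)
      then show ?thesis using i by blast
    next
      case (Inr B)
      then have B: "B \<in> P" using tV by (auto simp: vertices_def)
      have "c B \<noteq> Inr B" using c[OF B] t Inr by auto
      then obtain i where i: "c B = Inl i" "i \<in> B" using c[OF B] by (auto simp: SB_def)
      have bi: "blk P i = B" using blk_eq[OF B i(2)] .
      have "i \<in> {1..n+1}" using sub[OF B] i by blast
      moreover have "y i = t" using i bi Inr by (simp add: y_def)
      ultimately show ?thesis by blast
    qed
  qed
  ultimately show "T \<in> faces n P" unfolding faces_def using A by blast
qed

lemma facet_miss: "F \<in> facets n P \<Longrightarrow> B \<in> P \<Longrightarrow> \<exists>c. SB B - F = {c}"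
proof -
  assume F: "F \<in> facets n P" and B: "B \<in> P"
  have "card (SB B - F) = card (SB B) - card (SB B \<inter> F)"
    by (rule card_Diff_subset_Int) (use finSB[OF B] in auto)
  also have "\<dots> = 1" using facet_props(2)[OF F B] cardSB[OF B] by (simp add: Int_commute)
  finally show ?thesis using card_1_singletonE by blast
qed

lemma transitive:
  assumes F: "F \<in> facets n P" and G: "G \<in> facets n P"
  shows "\<exists>\<sigma>\<in>Cox n P. \<sigma> ` F = G"
proof -
  define cF where "cF B = (SOME c. SB B - F = {c})" for B
  define cG where "cG B = (SOME c. SB B - G = {c})" for B
  have cF: "SB B - F = {cF B}" if "B \<in> P" for B
    unfolding cF_def using facet_miss[OF F that] by (rule someI_ex)
  have cG: "SB B - G = {cG B}" if "B \<in> P" for B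
    unfolding cG_def using facet_miss[OF G that] by (rule someI_ex)
  define \<rho> where "\<rho> B = transpose (cF B) (cG B)" for B
  have rho: "\<rho> B permutes SB B" if "B \<in> P" for B
    unfolding \<rho>_def using cF[OF that] cG[OF that] by (intro permutes_swap_id) auto
  have gH: "glue \<rho> \<in> Hs n P" by (rule glue_Hs[OF rho])
  have "glue \<rho> ` F = G"
  proof
    show "glue \<rho> ` F \<subseteq> G"
    proof
      fix z assume "z \<in> glue \<rho> ` F"
      then obtain x where x: "x \<in> F" "z = glue \<rho> x" by blast
      then have xV: "x \<in> V" using facet_props(1)[OF F] by blast
      obtain B where B: "B \<in> P" "x \<in> SB B" using bo_in[OF xV] by blast
      have z: "z = transpose (cF B) (cG B) x" using glue_on[OF B] x by (simp add: \<rho>_def)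
      have "x \<noteq> cF B" using cF[OF B(1)] x by blast
      then have "z \<noteq> cG B" using z by (auto simp: transpose_def split: if_splits)
      moreover have "\<rho> B x \<in> SB B" using permutes_in_image[OF rho[OF B(1)]] B(2) by simp
      then have "z \<in> SB B" using z by (simp add: \<rho>_def)
      ultimately show "z \<in> G" using cG[OF B(1)] by blast
    qed
    show "G \<subseteq> glue \<rho> ` F"
    proof
      fix z assume z: "z \<in> G"
      then have zV: "z \<in> V" using facet_props(1)[OF G] by blast
      obtain B where B: "B \<in> P" "z \<in> SB B" using bo_in[OF zV] by blast
      define x where "x = transpose (cF B) (cG B) z"
      have "z \<noteq> cG B" using cG[OF B(1)] z by blast
      then have "x \<noteq> cF B" unfolding x_def by (auto simp: transpose_def split: if_splits)
      moreover have "\<rho> B z \<in> SB B" using permutes_in_image[OF rho[OF B(1)]] B(2) by simp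
      then have xS: "x \<in> SB B" by (simp add: \<rho>_def x_def)
      ultimately have "x \<in> F" using cF[OF B(1)] by blast
      moreover have "glue \<rho> x = z" using glue_on[OF B(1) xS] by (simp add: \<rho>_def x_def)
      ultimately show "z \<in> glue \<rho> ` F" by blast
    qed
  qed
  then show ?thesis using gH Cox_eq by blast
qed


lemma aut_intro:
  assumes sV: "\<sigma> permutes V" and fc: "\<And>T. T \<subseteq> V \<Longrightarrow> \<sigma> ` T \<in> faces n P \<longleftrightarrow> T \<in> faces n P"
  shows "\<sigma> \<in> Aut n P"
proof -
  have "(image \<sigma>) ` faces n P = faces n P"
  proof
    show "image \<sigma> ` faces n P \<subseteq> faces n P"
    proof
      fix X assume "X \<in> image \<sigma> ` faces n P"
      then obtain T where T: "T \<in> faces n P" "X = \<sigma> ` T" by blast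
      have "T \<subseteq> V" using T(1) unfolding faces_char by blast
      then show "X \<in> faces n P" using fc T by blast
    qed
    show "faces n P \<subseteq> image \<sigma> ` faces n P"
    proof
      fix T assume T: "T \<in> faces n P"
      then have TV: "T \<subseteq> V" unfolding faces_char by blast
      define T' where "T' = inv' \<sigma> ` T"
      have ip: "inv' \<sigma> permutes V" using permutes_inv[OF sV] .
      have T'V: "T' \<subseteq> V" unfolding T'_def using image_mono[OF TV, of "inv' \<sigma>"] permutes_image[OF ip] by simp
      have "\<sigma> ` T' = T" unfolding T'_def image_comp using permutes_inverses(1)[OF sV]
        by (simp add: comp_def)
      then have "T' \<in> faces n P" using fc[OF T'V] T by simp
      then show "T \<in> image \<sigma> ` faces n P" using \<open>\<sigma> ` T' = T\<close> by blast
    qed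
  qed
  then show ?thesis using sV by (simp add: Aut_def)
qed

lemma Hs_sub_Aut: "Hs n P \<subseteq> Aut n P"
proof
  fix \<sigma> assume s: "\<sigma> \<in> Hs n P"
  have sV: "\<sigma> permutes V" using s by (simp add: Hs_def)
  have inj: "inj \<sigma>" using permutes_inj[OF sV] .
  show "\<sigma> \<in> Aut n P"
  proof (rule aut_intro[OF sV])
    fix T assume TV: "T \<subseteq> V"
    have "\<sigma> ` T \<subseteq> V" using TV permutes_image[OF sV] by blast
    moreover have "SB B \<subseteq> \<sigma> ` T \<longleftrightarrow> SB B \<subseteq> T" if "B \<in> P" for B
    proof -
      have "SB B = \<sigma> ` SB B" using s that by (simp add: Hs_def)
      then have "SB B \<subseteq> \<sigma> ` T \<longleftrightarrow> \<sigma> ` SB B \<subseteq> \<sigma> ` T" by simp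
      also have "\<dots> \<longleftrightarrow> SB B \<subseteq> T" by (rule inj_image_subset_iff[OF inj])
      finally show ?thesis .
    qed
    ultimately show "\<sigma> ` T \<in> faces n P \<longleftrightarrow> T \<in> faces n P" using TV unfolding faces_char by auto
  qed
qed

lemma Aut_faces: "\<sigma> \<in> Aut n P \<Longrightarrow> \<sigma> ` T \<in> faces n P \<longleftrightarrow> T \<in> faces n P"
proof -
  assume a: "\<sigma> \<in> Aut n P"
  have sV: "\<sigma> permutes V" and im: "(image \<sigma>) ` faces n P = faces n P" using a by (auto simp: Aut_def)
  have inj: "inj \<sigma>" using permutes_inj[OF sV] .
  show ?thesis
  proof
    assume "\<sigma> ` T \<in> faces n P"
    then obtain T' where "T' \<in> faces n P" "\<sigma> ` T = \<sigma> ` T'" using im by (metis imageE)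
    then show "T \<in> faces n P" using inj_image_eq_iff[OF inj] by metis
  next
    assume "T \<in> faces n P"
    then show "\<sigma> ` T \<in> faces n P" using im by blast
  qed
qed

lemma SB_nonface: "B \<in> P \<Longrightarrow> SB B \<notin> faces n P"
  unfolding faces_char by blast

lemma SB_ne: "SB B \<noteq> {}"
  by (simp add: SB_def)

lemma Aut_sub_Hs:
  assumes injc: "inj_on card P"
  shows "Aut n P \<subseteq> Hs n P"
proof
  fix \<sigma> assume a: "\<sigma> \<in> Aut n P"
  have sV: "\<sigma> permutes V" using a by (simp add: Aut_def)
  have inj: "inj \<sigma>" using permutes_inj[OF sV] .
  have "\<sigma> ` SB B = SB B" if B: "B \<in> P" for B
  proof -
    have "\<sigma> ` SB B \<notin> faces n P" using Aut_faces[OF a] SB_nonface[OF B] by blast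
    moreover have "\<sigma> ` SB B \<noteq> {}" "\<sigma> ` SB B \<subseteq> V"
      using SB_ne SB_V[OF B] permutes_image[OF sV] by auto
    ultimately obtain C where C: "C \<in> P" "SB C \<subseteq> \<sigma> ` SB B" unfolding faces_char by blast
    define U where "U = SB B \<inter> \<sigma> -` SB C"
    have sU: "\<sigma> ` U = SB C" unfolding U_def using C(2) by blast
    have "U \<notin> faces n P" using Aut_faces[OF a, of U] sU SB_nonface[OF C(1)] by simp
    moreover have "U \<noteq> {}" using sU SB_ne by auto
    moreover have "U \<subseteq> V" using SB_V[OF B] U_def by blast
    ultimately obtain D where D: "D \<in> P" "SB D \<subseteq> U" unfolding faces_char by blast
    have "D = B" using SB_uniq[OF D(1) B] D(2) SB_ne[of D] U_def by blast
    then have "SB B \<subseteq> U" using D by simp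
    then have "\<sigma> ` SB B \<subseteq> SB C" unfolding U_def by blast
    with C(2) have eq: "\<sigma> ` SB B = SB C" by blast
    have "card (SB C) = card (SB B)" unfolding eq[symmetric]
      by (rule card_image) (rule inj_on_subset[OF inj], simp)
    then have "card C = card B" using cardSB B C(1) by simp
    then have "C = B" using injc B C(1) by (meson inj_onD)
    then show ?thesis using eq by simp
  qed
  then show "\<sigma> \<in> Hs n P" using sV by (simp add: Hs_def)
qed


lemma not_inj_Aut:
  assumes ni: "\<not> inj_on card P"
  shows "Aut n P \<noteq> Hs n P"
proof -
  obtain B C where B: "B \<in> P" and C: "C \<in> P" and BC: "B \<noteq> C" and cc: "card B = card C"
    using ni unfolding inj_on_def by blast
  obtain f where f: "bij_betw f B C"
    using finite_same_card_bij[OF finB[OF B] finB[OF C] cc] by blast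
  define g where "g = inv_into B f"
  have g: "bij_betw g C B" unfolding g_def using bij_betw_inv_into[OF f] .
  have gf: "g (f i) = i" if "i \<in> B" for i unfolding g_def using f that by (metis bij_betw_inv_into_left)
  have fg: "f (g i) = i" if "i \<in> C" for i unfolding g_def using f that by (metis bij_betw_inv_into_right)
  have fC: "f i \<in> C" if "i \<in> B" for i using f that bij_betwE by blast
  have gB: "g i \<in> B" if "i \<in> C" for i using g that bij_betwE by blast
  have dBC: "B \<inter> C = {}" using disj[OF B C BC] .
  define pi where "pi D = (if D = B then C else if D = C then B else D)" for D
  define sw where "sw x = (case x of Inl i \<Rightarrow> (if i \<in> B then Inl (f i) else if i \<in> C then Inl (g i) else Inl i)
     | Inr D \<Rightarrow> Inr (pi D))" for x
  have swsw: "sw (sw x) = x" for x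
  proof (cases x)
    case (Inl i)
    then show ?thesis using fC gB gf fg dBC by (auto simp: sw_def)
  next
    case (Inr D)
    then show ?thesis using BC by (auto simp: sw_def pi_def)
  qed
  have inj: "inj sw" by (metis injI swsw)
  have piP: "pi D \<in> P" if "D \<in> P" for D using that B C by (simp add: pi_def)
  have swSB: "sw ` SB D = SB (pi D)" if D: "D \<in> P" for D
  proof (cases "D = B")
    case True
    have "sw ` Inl ` B = Inl ` C"
    proof -
      have "sw ` Inl ` B = Inl ` f ` B" using True by (auto simp: sw_def image_image)
      also have "f ` B = C" using f by (simp add: bij_betw_def)
      finally show ?thesis .
    qed
    then show ?thesis using True by (simp add: SB_def sw_def pi_def)
  next
    case nB: False
    show ?thesis
    proof (cases "D = C")
      case True
      have "sw ` Inl ` C = Inl ` B"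
      proof -
        have "sw ` Inl ` C = Inl ` g ` C" using True dBC by (force simp: sw_def image_image)
        also have "g ` C = B" using g by (simp add: bij_betw_def)
        finally show ?thesis .
      qed
      then show ?thesis using True BC by (simp add: SB_def sw_def pi_def)
    next
      case False
      have dB: "D \<inter> B = {}" using disj[OF D B nB] .
      have dC: "D \<inter> C = {}" using disj[OF D C False] .
      have "sw ` Inl ` D = Inl ` D"
      proof -
        have "\<forall>i\<in>D. sw (Inl i) = Inl i" using dB dC by (auto simp: sw_def)
        then show ?thesis by (metis (no_types, lifting) image_cong image_image image_ident)
      qed
      then show ?thesis using nB False by (simp add: SB_def sw_def pi_def)
    qed
  qed
  have swV: "sw ` V \<subseteq> V"
  proof
    fix z assume "z \<in> sw ` V"
    then obtain x where x: "x \<in> V" "z = sw x" by blast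
    obtain D where D: "D \<in> P" "x \<in> SB D" using bo_in[OF x(1)] by blast
    have "z \<in> SB (pi D)" using swSB[OF D(1)] D(2) x(2) by blast
    then show "z \<in> V" using SB_V[OF piP[OF D(1)]] by blast
  qed
  have swV': "sw ` V = V"
  proof
    show "V \<subseteq> sw ` V"
    proof
      fix x assume "x \<in> V"
      then have "sw x \<in> V" using swV by blast
      then show "x \<in> sw ` V" using swsw[of x] by (metis image_eqI)
    qed
  qed (rule swV)
  have out: "sw x = x" if "x \<notin> V" for x
  proof (cases x)
    case (Inl i)
    then have "i \<notin> B" "i \<notin> C" using that sub[OF B] sub[OF C] by (auto simp: vertices_def)
    then show ?thesis using Inl by (simp add: sw_def)
  next
    case (Inr D)
    then have "D \<noteq> B" "D \<noteq> C" using that B C by (auto simp: vertices_def)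
    then show ?thesis using Inr by (simp add: sw_def pi_def)
  qed
  have sV: "sw permutes V"
  proof (rule bij_imp_permutes)
    show "bij_betw sw V V" unfolding bij_betw_def using inj_on_subset[OF inj subset_UNIV] swV' by blast
  qed (rule out)
  have "sw \<in> Aut n P"
  proof (rule aut_intro[OF sV])
    fix T assume TV: "T \<subseteq> V"
    have ssT: "sw ` sw ` T = T" by (simp add: image_image swsw)
    have a1: "sw ` T \<noteq> {} \<longleftrightarrow> T \<noteq> {}" by simp
    have a2: "sw ` T \<subseteq> V" using TV swV by blast
    have a3: "SB D \<subseteq> sw ` T \<longleftrightarrow> SB (pi D) \<subseteq> T" if D: "D \<in> P" for D
    proof -
      have "SB D \<subseteq> sw ` T \<longleftrightarrow> sw ` SB D \<subseteq> sw ` sw ` T" by (rule inj_image_subset_iff[OF inj, symmetric])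
      then show ?thesis using ssT swSB[OF D] by simp
    qed
    have pipi: "pi (pi D) = D" for D using BC by (simp add: pi_def)
    have a4: "(\<forall>D\<in>P. \<not> SB (pi D) \<subseteq> T) \<longleftrightarrow> (\<forall>D\<in>P. \<not> SB D \<subseteq> T)"
      using piP pipi by metis
    show "sw ` T \<in> faces n P \<longleftrightarrow> T \<in> faces n P"
      unfolding faces_char using a1 a2 a3 a4 TV by auto
  qed
  moreover have "sw \<notin> Hs n P"
  proof
    assume "sw \<in> Hs n P"
    then have "sw (Inr B) \<in> SB B" using Hs_in[OF _ B] by (simp add: SB_def)
    then show False using BC by (auto simp: sw_def pi_def SB_def)
  qed
  ultimately show ?thesis by blast
qed

end

theorem proposition2p8:
  fixes n :: nat and P :: "nat set set"
  assumes "n \<ge> 2" and "partition_on {1..n+1} P"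
  shows "Cox_group n P \<cong> product_group P (\<lambda>B. sym_group (1 + card B))
      \<and> order (Cox_group n P) = (\<Prod>B\<in>P. fact (card B + 1))
      \<and> (Cox n P = Aut n P \<longleftrightarrow> inj_on card P)
      \<and> (\<forall>F\<in>facets n P. \<forall>G\<in>facets n P. \<exists>\<sigma>\<in>Cox n P. \<sigma> ` F = G)"
proof -
  interpret kp n P by standard (rule assms(2))
  have 1: "Cox_group n P \<cong> product_group P (\<lambda>B. sym_group (1 + card B))"
    by (rule is_isoI[OF phi_iso])
  have 3: "Cox n P = Aut n P \<longleftrightarrow> inj_on card P"
  proof
    assume "Cox n P = Aut n P"
    then show "inj_on card P" using not_inj_Aut Cox_eq by metis
  next
    assume "inj_on card P"
    then show "Cox n P = Aut n P" using Aut_sub_Hs Hs_sub_Aut Cox_eq by blast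
  qed
  show ?thesis using 1 order_Cox 3 transitive by blast
qed

end
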